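(* For $f>1$ let $h^*=h^*(f)>1$ and $h_*=h_*(f)\in(0,1)$ be the two solutions $h$ of $h-\log h=f$, and define $$j^*(f)=\frac1{h^*-1}-\frac1{(2(f-1))^{1/2}},\qquad j_*(f)=\frac1{1-h_*}-\frac1{(2(f-1))^{1/2}}.$$ Then: (a) as $f\to1$, $j^*\to-\frac13$ and $j_*\to\frac13$; (b) $\frac{dj^*}{df}>0$ and $\frac{dj_*}{df}>0$ for $f>1$, and $\frac{dj^*}{df}=O((f-1)^{-1/2})$, $\frac{dj_*}{df}=O((f-1)^{-1/2})$ as $f\to1$; (c) $\frac{d^2j^*}{df^2}<0$ and $\frac{d^2j_*}{df^2}<0$ for $f>1$; (d) the function $j^*+j_*=\frac1{h^*-1}+\frac1{1-h_*}-\big(\frac2{f-1}\big)^{1/2}$ satisfies $\frac{d(j^*+j_* )}{df}>0$ and $\frac{d^2(j^*+j_* )}{df^2}<0$ for $f>1$, and $j^*+j_*\to0$, $\frac{d(j^*+j_* )}{df}=O((f-1)^{-1/2})$ as $f\to1$; (e) $0<j^*+j_*<1$ for $f>1$. *)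

theory Defs
  imports "HOL-Analysis.Analysis" "HOL-Library.Landau_Symbols"
begin

definition h_up :: "real \<Rightarrow> real" where
  "h_up f = (THE h. h > 1 \<and> h - ln h = f)"

definition h_lo :: "real \<Rightarrow> real" where
  "h_lo f = (THE h. 0 < h \<and> h < 1 \<and> h - ln h = f)"

definition j_up :: "real \<Rightarrow> real" where
  "j_up f = 1 / (h_up f - 1) - 1 / sqrt (2 * (f - 1))"

definition j_lo :: "real \<Rightarrow> real" where
  "j_lo f = 1 / (1 - h_lo f) - 1 / sqrt (2 * (f - 1))"

end

theory Submission
  imports Defs "HOL-Real_Asymp.Real_Asymp"
begin


definition rho :: "real \<Rightarrow> real" where
  "rho h = exp ((ln 3 - ln h - ln (2*h+1)) / 5)"

lemma rho_pos: "rho h > 0" by (simp add: rho_def)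

lemma rho_pow5: assumes "h > 0" shows "rho h ^ 5 = 3 / (h*(2*h+1))"
proof -
  have "rho h ^ 5 = exp (of_nat 5 * ((ln 3 - ln h - ln (2*h+1)) / 5))"
    unfolding rho_def by (rule exp_of_nat_mult[symmetric])
  also have "\<dots> = exp (ln 3 - ln h - ln (2*h+1))" by simp
  also have "\<dots> = 3 / (h*(2*h+1))" using assms by (simp add: exp_diff)
  finally show ?thesis .
qed

lemma poly_key: assumes "(h::real) > 0" "h \<noteq> 1"
  shows "3125*h^2*(2*h+1)^7 < 9*(6*h^2+8*h+1)^5"
proof -
  define Q where "Q = 9 + 378*h + 3652*h^2 + 17896*h^3 + 60880*h^4 + 154496*h^5 + 245552*h^6 + 206528*h^7 + 69984*h^8"
  have "9*(6*h^2+8*h+1)^5 - 3125*h^2*(2*h+1)^7 = (h-1)^2 * Q"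
    unfolding Q_def by algebra
  moreover have "Q > 0" unfolding Q_def using assms by (intro add_pos_pos add_pos_nonneg) auto
  moreover have "(h-1)^2 > 0" using assms by simp
  ultimately show ?thesis by (smt (verit) mult_pos_pos)
qed

lemma bracket_pos: assumes "(h::real) > 0" "h \<noteq> 1"
  shows "rho h ^ 2 * (6*h^2+8*h+1) > 5*(2*h+1)"
proof -
  define a where "a = 5*(2*h+1)/(6*h^2+8*h+1)"
  have "a ^ 5 = 3125*(2*h+1)^5/(6*h^2+8*h+1)^5" unfolding a_def power_divide power_mult_distrib by simp
  also have "\<dots> < 9 / (h^2*(2*h+1)^2)"
  proof -
    have p: "6*h^2+8*h+1 > 0" using assms by (simp add: add_pos_pos)
    show ?thesis using poly_key[OF assms] assms p by (simp add: divide_simps) (simp add: algebra_simps power_mult_distrib)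
  qed
  also have "\<dots> = (rho h ^ 5)^2" using rho_pow5[OF assms(1)] by (simp add: power_divide power_mult_distrib)
  also have "\<dots> = (rho h ^ 2) ^ 5" by (simp flip: power_mult add: mult.commute)
  finally have "a < rho h ^ 2" by (rule power_less_imp_less_base) simp
  moreover have p: "6*h^2+8*h+1 > 0" using assms by (simp add: add_pos_pos)
  ultimately show ?thesis unfolding a_def using assms by (simp add: divide_simps)
qed


lemma bracket_pos2: assumes "(h::real) > 0" "h \<noteq> 1"
  shows "rho h ^ 2 * (6*h^2+8*h+1) / (5*h*(2*h+1)) - 1/h > 0"
proof -
  have d: "5*h*(2*h+1) > 0" using assms by simp
  have "rho h ^ 2 * (6*h^2+8*h+1) / (5*h*(2*h+1)) - 1/h = (rho h ^ 2 * (6*h^2+8*h+1) - 5*(2*h+1)) / (5*h*(2*h+1))"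
    using d assms by (simp add: divide_simps)
  also have "\<dots> > 0" using bracket_pos[OF assms] d by simp
  finally show ?thesis .
qed

definition Phi :: "real \<Rightarrow> real" where
  "Phi h = ln h - (h - 1) + (h-1)^2 * rho h ^ 2 / 2"

lemma rho_deriv: assumes "h > 0"
  shows "(rho has_real_derivative rho h * (- 1/h - 2/(2*h+1)) / 5) (at h)"
proof -
  have "2*h+1 > 0" using assms by simp
  then show ?thesis unfolding rho_def using assms
    by (auto intro!: derivative_eq_intros)
qed

lemma Phi_deriv: assumes "h > 0"
  shows "(Phi has_real_derivative (h-1) * (rho h ^ 2 * (6*h^2+8*h+1) / (5*h*(2*h+1)) - 1/h)) (at h)"
proof -
  have "2*h+1 > 0" using assms by simp
  have "(Phi has_real_derivative 1/h - 1 + 2*(h-1)*rho h^2/2 + (h-1)^2 * (2*rho h * (rho h * (- 1/h - 2/(2*h+1)) / 5))/2) (at h)"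
    unfolding Phi_def using assms
    by (auto intro!: derivative_eq_intros rho_deriv)
  moreover have "1/h - 1 + 2*(h-1)*rho h^2/2 + (h-1)^2 * (2*rho h * (rho h * (- 1/h - 2/(2*h+1)) / 5))/2
     = (h-1) * (rho h ^ 2 * (6*h^2+8*h+1) / (5*h*(2*h+1)) - 1/h)"
    using assms \<open>2*h+1>0\<close> by (simp add: divide_simps power2_eq_square) (simp add: algebra_simps)
  ultimately show ?thesis by simp
qed

lemma Phi_cont: "continuous_on {a..b} Phi" if "a > 0"
  using that unfolding Phi_def rho_def
  by (intro continuous_intros) auto

lemma Phi_pos: assumes "h > 0" "h \<noteq> 1" shows "Phi h > 0"
proof (cases "h > 1")
  case True
  have "Phi 1 < Phi h"
  proof (rule DERIV_pos_imp_increasing_open[OF True])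
    fix x assume x: "1 < x" "x < h"
    have "rho x ^ 2 * (6*x^2+8*x+1) / (5*x*(2*x+1)) - 1/x > 0"
      using bracket_pos2[of x] x by simp
    then show "\<exists>y. DERIV Phi x :> y \<and> 0 < y" using Phi_deriv[of x] x by auto
  qed (rule Phi_cont, simp)
  moreover have "Phi 1 = 0" by (simp add: Phi_def)
  ultimately show ?thesis by simp
next
  case False
  hence h1: "h < 1" using assms by simp
  have "Phi 1 < Phi h"
  proof (rule DERIV_neg_imp_decreasing_open[OF h1])
    fix x assume x: "h < x" "x < 1"
    have "rho x ^ 2 * (6*x^2+8*x+1) / (5*x*(2*x+1)) - 1/x > 0"
      using bracket_pos2[of x] x assms by simp
    then show "\<exists>y. DERIV Phi x :> y \<and> y < 0" using Phi_deriv[of x] x assms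
      by (auto intro!: exI mult_neg_pos)
  qed (rule Phi_cont, simp add: assms)
  moreover have "Phi 1 = 0" by (simp add: Phi_def)
  ultimately show ?thesis by simp
qed

lemma aux_lin: "0 < l - (h - 1) + X / 2 \<Longrightarrow> 2*(h - l - 1) < (X::real)"
  by auto

lemma keyB: assumes "h > 0" "h \<noteq> 1"
  shows "2*(h - ln h - 1) < (h-1)^2 * rho h ^ 2"
proof -
  have "Phi h > 0" by (rule Phi_pos[OF assms])
  hence "0 < ln h - (h - 1) + (h-1)^2 * rho h ^ 2 / 2" by (simp only: Phi_def)
  thus ?thesis by (rule aux_lin)
qed


lemma C12: assumes h: "h > 0" "h \<noteq> 1"
  shows "h * sqrt (2*(h - ln h - 1)) ^ 3 < \<bar>h-1\<bar>^3"
    and "h * (2*h+1) * sqrt (2*(h - ln h - 1)) ^ 5 < 3 * \<bar>h-1\<bar>^5"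
proof -
  define s where "s = sqrt (2*(h - ln h - 1))"
  have e0: "0 \<le> h - ln h - 1" using ln_le_minus_one[OF h(1)] by simp
  have s0: "s \<ge> 0" unfolding s_def using e0 by auto
  have "s^2 = 2*(h - ln h - 1)" unfolding s_def by (rule real_sqrt_pow2) (use e0 in auto)
  also have "\<dots> < (\<bar>h-1\<bar> * rho h)^2" using keyB[OF h] by (simp add: power_mult_distrib)
  finally have sl: "s < \<bar>h-1\<bar> * rho h"
    by (rule power_less_imp_less_base) (simp add: rho_pos order.strict_implies_order)
  have h21: "h*(2*h+1) > 0" using h by simp
  have "s^5 < (\<bar>h-1\<bar> * rho h)^5" by (rule power_strict_mono[OF sl s0]) simp
  also have "\<dots> = \<bar>h-1\<bar>^5 * (3 / (h*(2*h+1)))" by (simp add: power_mult_distrib rho_pow5[OF h(1)])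
  finally have "h*(2*h+1) * s^5 < h*(2*h+1) * (\<bar>h-1\<bar>^5 * (3 / (h*(2*h+1))))"
    using h21 by (simp only: mult_less_cancel_left_pos)
  also have "\<dots> = 3 * \<bar>h-1\<bar>^5" using h21 by (simp add: field_simps)
  finally show "h * (2*h+1) * sqrt (2*(h - ln h - 1)) ^ 5 < 3 * \<bar>h-1\<bar>^5" unfolding s_def .
  have r3: "rho h ^ 3 \<le> 1/h"
  proof (rule power_le_imp_le_base[where n=4])
    have "(rho h ^ 3) ^ Suc 4 = (rho h ^ 5) ^ 3" by (simp flip: power_mult)
    also have "\<dots> = 27 / (h*(2*h+1))^3" using rho_pow5[OF h(1)] by (simp add: power_divide)
    also have "\<dots> \<le> (1/h) ^ Suc 4"
    proof -
      have "27*h^2 \<le> (2*h+1)^3"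
      proof -
        have "(2*h+1)^3 - 27*h^2 = (h-1)^2*(8*h+1)" by algebra
        moreover have "(h-1)^2*(8*h+1) \<ge> 0" using h by simp
        ultimately show ?thesis by simp
      qed
      then have "h^3 * (27*h^2) \<le> h^3 * (2*h+1)^3" by (rule mult_left_mono) (use h in simp)
      then have "27*h^5 \<le> h^3 * (2*h+1)^3" by (simp add: algebra_simps power_add[symmetric] numeral_eq_Suc)
      then show ?thesis using h h21 by (simp add: divide_simps power_mult_distrib)
    qed
    finally show "(rho h ^ 3) ^ Suc 4 \<le> (1/h) ^ Suc 4" .
  qed (use h in simp)
  have "s^3 < (\<bar>h-1\<bar> * rho h)^3" by (rule power_strict_mono[OF sl s0]) simp
  also have "\<dots> = \<bar>h-1\<bar>^3 * rho h ^ 3" by (simp add: power_mult_distrib)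
  also have "\<dots> \<le> \<bar>h-1\<bar>^3 * (1/h)" by (rule mult_left_mono[OF r3]) simp
  finally have "h * s^3 < h * (\<bar>h-1\<bar>^3 * (1/h))" using h by (simp only: mult_less_cancel_left_pos)
  also have "\<dots> = \<bar>h-1\<bar>^3" using h by simp
  finally show "h * sqrt (2*(h - ln h - 1)) ^ 3 < \<bar>h-1\<bar>^3" unfolding s_def .
qed

lemma gcont: "(x::real) > 0 \<Longrightarrow> isCont (\<lambda>x. x - ln x) x"
  by (auto intro!: continuous_intros)

lemma g_mono_up: assumes "1 \<le> a" "a < b" shows "a - ln a < b - ln (b::real)"
proof (rule DERIV_pos_imp_increasing_open[OF assms(2)])
  fix x assume x: "a < x" "x < b"
  then have "x > 1" using assms by simp
  then show "\<exists>y. ((\<lambda>x. x - ln x) has_real_derivative y) (at x) \<and> 0 < y"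
    by (intro exI[of _ "1 - 1/x"]) (auto intro!: derivative_eq_intros)
next
  show "continuous_on {a..b} (\<lambda>x. x - ln x)" using assms by (intro continuous_intros) auto
qed

lemma g_mono_lo: assumes "0 < a" "a < b" "b \<le> 1" shows "a - ln a > b - ln (b::real)"
proof (rule DERIV_neg_imp_decreasing_open[OF assms(2)])
  fix x assume x: "a < x" "x < b"
  then have "x < 1" "x > 0" using assms by simp_all
  then show "\<exists>y. ((\<lambda>x. x - ln x) has_real_derivative y) (at x) \<and> y < 0"
    by (intro exI[of _ "1 - 1/x"]) (auto intro!: derivative_eq_intros simp: field_simps)
next
  show "continuous_on {a..b} (\<lambda>x. x - ln x)" using assms by (intro continuous_intros) auto
qed

lemma g_inj_up: "1 < a \<Longrightarrow> 1 < b \<Longrightarrow> a - ln a = b - ln b \<Longrightarrow> a = (b::real)"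
  using g_mono_up[of a b] g_mono_up[of b a] by (cases a b rule: linorder_cases) auto

lemma g_inj_lo: "0 < a \<Longrightarrow> a < 1 \<Longrightarrow> 0 < b \<Longrightarrow> b < 1 \<Longrightarrow> a - ln a = b - ln b \<Longrightarrow> a = (b::real)"
  using g_mono_lo[of a b] g_mono_lo[of b a] by (cases a b rule: linorder_cases) auto

lemma ex_up: assumes "(f::real) > 1" shows "\<exists>h. h > 1 \<and> h - ln h = f"
proof -
  have "ln (2*f) = ln 2 + ln f" using assms by (simp add: ln_mult)
  moreover have "ln f \<le> f - 1" using assms ln_le_minus_one by simp
  moreover have "ln 2 < (1::real)" using ln_less_self[of 2] ln_2_less_1 by simp
  ultimately have "f \<le> 2*f - ln (2*f)" by simp
  moreover have "(1::real) - ln 1 \<le> f" using assms by simp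
  ultimately obtain h where "1 \<le> h" "h \<le> 2*f" "h - ln h = f"
    using IVT[of "\<lambda>x. x - ln x" 1 f "2*f"] assms gcont
    by auto
  moreover have "h \<noteq> 1" using assms \<open>h - ln h = f\<close> by auto
  ultimately show ?thesis by (intro exI[of _ h]) auto
qed

lemma ex_lo: assumes "(f::real) > 1" shows "\<exists>h. 0 < h \<and> h < 1 \<and> h - ln h = f"
proof -
  have "f \<le> exp (-f) - ln (exp (-f))" by simp
  moreover have "(1::real) - ln 1 \<le> f" using assms by simp
  moreover have "exp (-f) \<le> 1" using assms by simp
  ultimately obtain h where "exp (-f) \<le> h" "h \<le> 1" "h - ln h = f"
    using IVT2[of "\<lambda>x. x - ln x" 1 f "exp (-f)"] assms gcont
    by (smt (verit) exp_gt_zero)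
  moreover have "h \<noteq> 1" using assms \<open>h - ln h = f\<close> by auto
  moreover have "h > 0" using \<open>exp (-f) \<le> h\<close> by (smt (verit) exp_gt_zero)
  ultimately show ?thesis by auto
qed

lemma h_up: assumes "f > 1" shows "h_up f > 1" "h_up f - ln (h_up f) = f"
proof -
  have "\<exists>!h. h > 1 \<and> h - ln h = f" using ex_up[OF assms] g_inj_up by blast
  from theI'[OF this] show "h_up f > 1" "h_up f - ln (h_up f) = f" unfolding h_up_def by auto
qed

lemma h_up_eq: assumes "h > 1" shows "h_up (h - ln h) = h"
proof -
  have "h - ln h > 1" using g_mono_up[of 1 h] assms by simp
  from h_up[OF this] show ?thesis using g_inj_up assms by blast
qed

lemma h_lo: assumes "f > 1" shows "h_lo f > 0" "h_lo f < 1" "h_lo f - ln (h_lo f) = f"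
proof -
  have "\<exists>!h. 0 < h \<and> h < 1 \<and> h - ln h = f" using ex_lo[OF assms] g_inj_lo by blast
  from theI'[OF this] show "h_lo f > 0" "h_lo f < 1" "h_lo f - ln (h_lo f) = f" unfolding h_lo_def by auto
qed

lemma h_lo_eq: assumes "h > 0" "h < 1" shows "h_lo (h - ln h) = h"
proof -
  have "h - ln h > 1" using g_mono_lo[of h 1] assms by simp
  from h_lo[OF this] show ?thesis using g_inj_lo assms by blast
qed


lemma h_up_deriv: assumes "f > 1"
  shows "(h_up has_real_derivative h_up f / (h_up f - 1)) (at f)"
proof -
  define h where "h = h_up f"
  have h1: "h > 1" and hf: "h - ln h = f" using h_up[OF assms] by (auto simp: h_def)
  have cont: "isCont h_up f"
  proof -
    have "isCont h_up (h - ln h)"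
    proof (rule isCont_inverse_function[where f = "\<lambda>x. x - ln x" and d = "(h-1)/2"])
      show "0 < (h-1)/2" using h1 by simp
    next
      fix z assume "\<bar>z - h\<bar> \<le> (h-1)/2"
      from abs_le_D2[OF this] have "z > 1" using h1 by (auto simp: field_simps)
      then show "h_up (z - ln z) = z" by (rule h_up_eq)
    next
      fix z assume "\<bar>z - h\<bar> \<le> (h-1)/2"
      from abs_le_D2[OF this] have "z > 0" using h1 by (auto simp: field_simps)
      then show "isCont (\<lambda>x. x - ln x) z" by (rule gcont)
    qed
    then show ?thesis using hf by simp
  qed
  have "(h_up has_real_derivative inverse (1 - 1/h)) (at f)"
  proof (rule DERIV_inverse_function[where f = "\<lambda>x. x - ln x" and a = 1 and b = "f+1"])
    show "((\<lambda>x. x - ln x) has_real_derivative 1 - 1/h) (at (h_up f))"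
      using h1 unfolding h_def[symmetric] by (auto intro!: derivative_eq_intros)
    show "1 - 1/h \<noteq> 0" using h1 by simp
    show "1 < f" "f < f + 1" using assms by simp_all
    show "isCont h_up f" by (rule cont)
    fix y assume "1 < y" "y < f + 1"
    then show "h_up y - ln (h_up y) = y" using h_up by blast
  qed
  moreover have "inverse (1 - 1/h) = h / (h - 1)" using h1 by (simp add: field_simps)
  ultimately show ?thesis by (simp add: h_def)
qed

lemma h_lo_deriv: assumes "f > 1"
  shows "(h_lo has_real_derivative h_lo f / (h_lo f - 1)) (at f)"
proof -
  define h where "h = h_lo f"
  have h0: "h > 0" and h1: "h < 1" and hf: "h - ln h = f" using h_lo[OF assms] by (auto simp: h_def)
  define d where "d = min h (1-h) / 2"
  have d0: "d > 0" using h0 h1 by (simp add: d_def)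
  have dd: "\<bar>z - h\<bar> \<le> d \<Longrightarrow> 0 < z \<and> z < 1" for z
  proof -
    assume a: "\<bar>z - h\<bar> \<le> d"
    have "d \<le> h/2" "d \<le> (1-h)/2" by (auto simp: d_def)
    with abs_le_D1[OF a] abs_le_D2[OF a] h0 h1 show ?thesis by (auto simp: field_simps)
  qed
  have cont: "isCont h_lo f"
  proof -
    have "isCont h_lo (h - ln h)"
    proof (rule isCont_inverse_function[where f = "\<lambda>x. x - ln x" and d = d])
      show "0 < d" by (rule d0)
    next
      fix z assume "\<bar>z - h\<bar> \<le> d"
      then show "h_lo (z - ln z) = z" using dd h_lo_eq by blast
    next
      fix z assume "\<bar>z - h\<bar> \<le> d"
      then show "isCont (\<lambda>x. x - ln x) z" using dd gcont by blast
    qed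
    then show ?thesis using hf by simp
  qed
  have "(h_lo has_real_derivative inverse (1 - 1/h)) (at f)"
  proof (rule DERIV_inverse_function[where f = "\<lambda>x. x - ln x" and a = 1 and b = "f+1"])
    show "((\<lambda>x. x - ln x) has_real_derivative 1 - 1/h) (at (h_lo f))"
      using h0 unfolding h_def[symmetric] by (auto intro!: derivative_eq_intros)
    show "1 - 1/h \<noteq> 0" using h0 h1 by simp
    show "1 < f" "f < f + 1" using assms by simp_all
    show "isCont h_lo f" by (rule cont)
    fix y assume "1 < y" "y < f + 1"
    then show "h_lo y - ln (h_lo y) = y" using h_lo by blast
  qed
  moreover have "inverse (1 - 1/h) = h / (h - 1)" using h0 h1 by (simp add: field_simps)
  ultimately show ?thesis by (simp add: h_def)
qed

lemma alg2: "s > 0 \<Longrightarrow> h \<noteq> 1 \<Longrightarrow> - (3 * s ^ 2 * (1 / (2 * s) * 2)) / (s ^ 3)^2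
      - (c * (h / (h - 1)) * (h - 1) ^ 3 - c * h * (3 * (h - 1)^2 * (h / (h - 1)))) / ((h - 1) ^ 3)^2
      = - 3 / s ^ 5 + c * h * (2 * h + 1) / (h - 1) ^ 5"
  for s h c :: real
proof -
  assume s: "s > 0" and h: "h \<noteq> 1"
  then have h': "h - 1 \<noteq> 0" by simp
  have a: "- (3 * s ^ 2 * (1 / (2 * s) * 2)) / (s ^ 3)^2 = - 3 / s ^ 5" using s
    by (simp add: field_simps power2_eq_square power3_eq_cube numeral_eq_Suc)
  have b: "(c * (h / (h - 1)) * (h - 1) ^ 3 - c * h * (3 * (h - 1)^2 * (h / (h - 1)))) = - c*h*(2*h+1)*(h-1)"
  proof -
    have e1: "c * (h / (h - 1)) * (h - 1) ^ 3 = c*h*(h-1)^2" using h' by (simp add: power3_eq_cube power2_eq_square)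
    have e2: "c * h * (3 * (h - 1)^2 * (h / (h - 1))) = c*h*(3*h*(h-1))" using h' by (simp add: power2_eq_square)
    show ?thesis unfolding e1 e2 by algebra
  qed
  have c: "- c*h*(2*h+1)*(h-1) / ((h - 1) ^ 3)^2 = - (c * h * (2 * h + 1) / (h - 1) ^ 5)"
  proof -
    have p: "((h - 1) ^ 3)^2 = (h-1)^5 * (h-1)" by algebra
    show ?thesis unfolding p by (simp only: nonzero_mult_divide_mult_cancel_right[OF h'])
  qed
  show ?thesis unfolding a b using c by simp
qed
lemma alg1: "s > 0 \<Longrightarrow> h \<noteq> 1 \<Longrightarrow> - (c * (h / (h - 1))) / (h - 1)^2 + (1 / (2 * s) * 2) / s^2
      = 1 / s ^ 3 - c * h / (h - 1) ^ 3"
  for s h c :: real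
  by (simp add: field_simps power2_eq_square power3_eq_cube)

definition Sq :: "real \<Rightarrow> real" where "Sq f = sqrt (2*(f-1))"

lemma Sq_pos: "f > 1 \<Longrightarrow> Sq f > 0" by (simp add: Sq_def)

lemma Sq_deriv: assumes "x > 1" shows "(Sq has_real_derivative 1 / Sq x) (at x)"
proof -
  have d: "((\<lambda>f. 2*(f-1)) has_real_derivative 2) (at x)" by (auto intro!: derivative_eq_intros)
  have "((\<lambda>f. sqrt (2*(f-1))) has_real_derivative inverse (sqrt (2*(x-1))) / 2 * 2) (at x)"
    by (rule DERIV_chain2[OF DERIV_real_sqrt d]) (use assms in simp)
  then show ?thesis unfolding Sq_def[abs_def] by (rule DERIV_cong) (simp add: inverse_eq_divide)
qed

lemma alg_d: fixes h c :: real assumes h': "h - 1 \<noteq> 0"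
  shows "(c*(h/(h-1))*(h-1)^3 - c*h*(of_nat 3*((h/(h-1) - 0)*(h-1)^(3 - Suc 0))))/((h-1)^3*(h-1)^3)
     = -(c*h*(2*h+1)/(h-1)^5)"
proof -
  have e1: "c * (h / (h - 1)) * (h - 1) ^ 3 = c*h*(h-1)^2" using h' by (simp add: power3_eq_cube power2_eq_square)
  have e2: "c*h*(of_nat 3*((h/(h-1) - 0)*(h-1)^(3 - Suc 0))) = c*h*(3*h*(h-1))" using h' by (simp add: power2_eq_square)
  have b: "c*h*(h-1)^2 - c*h*(3*h*(h-1)) = - c*h*(2*h+1)*(h-1)" by algebra
  have p: "(h - 1) ^ 3 * (h - 1) ^ 3 = (h-1)^5 * (h-1)" by algebra
  show ?thesis unfolding e1 e2 b p by (simp only: nonzero_mult_divide_mult_cancel_right[OF h'])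
qed

lemma J_deriv1:
  fixes H :: "real \<Rightarrow> real"
  assumes x: "x > 1" "H x \<noteq> 1" and dH: "(H has_real_derivative H x / (H x - 1)) (at x)"
  shows "((\<lambda>f. c / (H f - 1) - 1 / Sq f) has_real_derivative
            (1 / Sq x ^ 3 - c * H x / (H x - 1) ^ 3)) (at x)"
proof -
  have s: "Sq x \<noteq> 0" using x Sq_pos by (metis less_irrefl)
  have hx: "H x - 1 \<noteq> 0" using x by simp
  have a: "((\<lambda>f. c/(H f - 1)) has_real_derivative (0 * (H x - 1) - c * (H x/(H x - 1) - 0)) / ((H x - 1)*(H x - 1))) (at x)"
    by (rule DERIV_divide[OF DERIV_const DERIV_diff[OF dH DERIV_const] hx])
  have b: "((\<lambda>f. 1/Sq f) has_real_derivative (0 * Sq x - 1 * (1/Sq x))/(Sq x * Sq x)) (at x)"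
    by (rule DERIV_divide[OF DERIV_const Sq_deriv[OF x(1)] s])
  have "((\<lambda>f. c/(H f - 1) - 1/Sq f) has_real_derivative
     (0 * (H x - 1) - c * (H x/(H x - 1) - 0)) / ((H x - 1)*(H x - 1)) - (0 * Sq x - 1 * (1/Sq x))/(Sq x * Sq x)) (at x)"
    by (rule DERIV_diff[OF a b])
  then show ?thesis
  proof (rule DERIV_cong)
    have "(0 * (H x - 1) - c * (H x/(H x - 1) - 0)) / ((H x - 1)*(H x - 1)) = - (c * H x / (H x - 1) ^ 3)"
      using hx by (simp add: power3_eq_cube)
    moreover have "(0 * Sq x - 1 * (1/Sq x))/(Sq x * Sq x) = - (1 / Sq x ^ 3)"
      using s by (simp add: power3_eq_cube)
    ultimately show "(0 * (H x - 1) - c * (H x/(H x - 1) - 0)) / ((H x - 1)*(H x - 1)) - (0 * Sq x - 1 * (1/Sq x))/(Sq x * Sq x)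
       = 1 / Sq x ^ 3 - c * H x / (H x - 1) ^ 3" by simp
  qed
qed

lemma J_deriv2:
  fixes H :: "real \<Rightarrow> real"
  assumes x: "x > 1" "H x \<noteq> 1" and dH: "(H has_real_derivative H x / (H x - 1)) (at x)"
  shows "((\<lambda>f. 1 / Sq f ^ 3 - c * H f / (H f - 1) ^ 3) has_real_derivative
            (- 3 / Sq x ^ 5 + c * H x * (2 * H x + 1) / (H x - 1) ^ 5)) (at x)"
proof -
  have s: "Sq x \<noteq> 0" using x Sq_pos by (metis less_irrefl)
  have hx: "H x - 1 \<noteq> 0" using x by simp
  have a: "((\<lambda>f. 1/Sq f^3) has_real_derivative (0 * Sq x^3 - 1 * (of_nat 3 * (1/Sq x * Sq x^(3 - Suc 0))))/(Sq x^3 * Sq x^3)) (at x)"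
    by (rule DERIV_divide[OF DERIV_const DERIV_power[OF Sq_deriv[OF x(1)]]]) (use s in simp)
  have b: "((\<lambda>f. c * H f / (H f - 1)^3) has_real_derivative (c*(H x/(H x-1))*(H x-1)^3 - c*H x*(of_nat 3*((H x/(H x-1) - 0)*(H x-1)^(3 - Suc 0))))/((H x-1)^3*(H x-1)^3)) (at x)"
    by (rule DERIV_divide[OF DERIV_cmult[OF dH] DERIV_power[OF DERIV_diff[OF dH DERIV_const]]]) (use hx in simp)
  from DERIV_diff[OF a b] show ?thesis
  proof (rule DERIV_cong)
    have "(0 * Sq x^3 - 1 * (of_nat 3 * (1/Sq x * Sq x^(3 - Suc 0))))/(Sq x^3 * Sq x^3) = - (3 / Sq x ^ 5)"
      using s by (simp add: field_simps numeral_eq_Suc)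
    then show "(0 * Sq x^3 - 1 * (of_nat 3 * (1/Sq x * Sq x^(3 - Suc 0))))/(Sq x^3 * Sq x^3) -
      (c*(H x/(H x-1))*(H x-1)^3 - c*H x*(of_nat 3*((H x/(H x-1) - 0)*(H x-1)^(3 - Suc 0))))/((H x-1)^3*(H x-1)^3)
      = - 3 / Sq x ^ 5 + c * H x * (2 * H x + 1) / (H x - 1) ^ 5"
      unfolding alg_d[OF hx] by simp
  qed
qed


lemma s1u: fixes s h :: real assumes "s > 0" "h > 1" "h* s^3 < abs (h-1)^3"
  shows "1/s^3 - 1*h/(h-1)^3 > 0"
proof -
  have a: "(h-1)^3 > 0" "s^3 > 0" using assms by simp_all
  have "h* s^3 < (h-1)^3" using assms by simp
  then have "h/(h-1)^3 < 1/s^3" using a by (simp add: divide_simps)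
  then show ?thesis by simp
qed

lemma s1l: fixes s h :: real assumes "s > 0" "0 < h" "h < 1" "h* s^3 < abs (h-1)^3"
  shows "1/s^3 - (-1)*h/(h-1)^3 > 0"
proof -
  have a: "(1-h)^3 > 0" "s^3 > 0" using assms by simp_all
  have e: "(h-1)^3 = - ((1-h)^3)" by algebra
  have "abs (h-1) = 1-h" using assms by simp
  then have "h* s^3 < (1-h)^3" using assms by simp
  then have "h/(1-h)^3 < 1/s^3" using a by (simp add: divide_simps)
  then show ?thesis unfolding e by simp
qed

lemma s2u: fixes s h :: real assumes "s > 0" "h > 1" "h*(2*h+1)* s^5 < 3*abs (h-1)^5"
  shows "-3/s^5 + 1*h*(2*h+1)/(h-1)^5 < 0"
proof -
  have a: "(h-1)^5 > 0" "s^5 > 0" using assms by simp_all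
  have "h*(2*h+1)* s^5 < 3*(h-1)^5" using assms by simp
  then have "h*(2*h+1)/(h-1)^5 < 3/s^5" using a by (simp add: divide_simps)
  then show ?thesis by simp
qed

lemma s2l: fixes s h :: real assumes "s > 0" "0 < h" "h < 1" "h*(2*h+1)* s^5 < 3*abs (h-1)^5"
  shows "-3/s^5 + (-1)*h*(2*h+1)/(h-1)^5 < 0"
proof -
  have a: "(1-h)^5 > 0" "s^5 > 0" using assms by simp_all
  have e: "(h-1)^5 = - ((1-h)^5)" by algebra
  have "abs (h-1) = 1-h" using assms by simp
  then have "h*(2*h+1)* s^5 < 3*(1-h)^5" using assms by simp
  then have "h*(2*h+1)/(1-h)^5 < 3/s^5" using a by (simp add: divide_simps)
  then show ?thesis unfolding e by simp
qed

lemma L_up: "filterlim h_up (at_right 1) (at_right (1::real))"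
proof -
  have ev1: "eventually (\<lambda>f. f > 1) (at_right (1::real))" by (rule eventually_at_right_less)
  have "(h_up \<longlongrightarrow> 1) (at_right 1)"
  proof (rule order_tendstoI)
    fix a :: real assume a: "a < 1"
    show "eventually (\<lambda>f. a < h_up f) (at_right 1)" using ev1
      by eventually_elim (use h_up a in force)
  next
    fix a :: real assume a: "1 < a"
    have "a - ln a > 1" using g_mono_up[of 1 a] a by simp
    then have "eventually (\<lambda>f. f \<in> {1<..<a - ln a}) (at_right 1)" by (rule eventually_at_right_real)
    then show "eventually (\<lambda>f. h_up f < a) (at_right 1)"
    proof eventually_elim
      case (elim f)
      then have f: "f > 1" "f < a - ln a" by auto
      show "h_up f < a"
      proof (rule ccontr)
        assume "\<not> h_up f < a"
        then have "a \<le> h_up f" by simp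
        then have "a - ln a \<le> h_up f - ln (h_up f)" using g_mono_up[of a "h_up f"] a
          by (cases "a = h_up f") auto
        then show False using h_up(2)[OF f(1)] f by simp
      qed
    qed
  qed
  moreover have "eventually (\<lambda>f. h_up f \<in> {1<..} \<and> h_up f \<noteq> 1) (at_right 1)" using ev1
  proof eventually_elim
    case (elim f) from h_up(1)[OF elim] show ?case by simp
  qed
  ultimately show ?thesis unfolding filterlim_at by auto
qed

lemma L_lo: "filterlim h_lo (at_left 1) (at_right (1::real))"
proof -
  have ev1: "eventually (\<lambda>f. f > 1) (at_right (1::real))" by (rule eventually_at_right_less)
  have "(h_lo \<longlongrightarrow> 1) (at_right 1)"
  proof (rule order_tendstoI)
    fix a :: real assume a: "1 < a"
    show "eventually (\<lambda>f. h_lo f < a) (at_right 1)" using ev1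
      by eventually_elim (use h_lo a in force)
  next
    fix a :: real assume a: "a < 1"
    show "eventually (\<lambda>f. a < h_lo f) (at_right 1)"
    proof (cases "a \<le> 0")
      case True
      from ev1 show ?thesis
      proof eventually_elim
        case (elim f) from h_lo(1)[OF elim] True show ?case by simp
      qed
    next
      case False
      then have a0: "a > 0" by simp
      have "a - ln a > 1" using g_mono_lo[of a 1] a a0 by simp
      then have "eventually (\<lambda>f. f \<in> {1<..<a - ln a}) (at_right 1)" by (rule eventually_at_right_real)
      then show ?thesis
      proof eventually_elim
        case (elim f)
        then have f: "f > 1" "f < a - ln a" by auto
        show "a < h_lo f"
        proof (rule ccontr)
          assume "\<not> a < h_lo f"
          then have "h_lo f \<le> a" by simp
          then have "a - ln a \<le> h_lo f - ln (h_lo f)" using g_mono_lo[of "h_lo f" a] a h_lo(1)[OF f(1)]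
            by (cases "a = h_lo f") auto
          then show False using h_lo(3)[OF f(1)] f by simp
        qed
      qed
    qed
  qed
  moreover have "eventually (\<lambda>f. h_lo f \<in> {..<1} \<and> h_lo f \<noteq> 1) (at_right 1)" using ev1
  proof eventually_elim
    case (elim f) from h_lo(2)[OF elim] show ?case by simp
  qed
  ultimately show ?thesis unfolding filterlim_at by auto
qed

lemma ra1: "((\<lambda>h::real. 1/(h-1) - 1/sqrt(2*(h - ln h - 1))) \<longlongrightarrow> -(1/3)) (at_right 1)"
  by real_asymp
lemma ra2: "((\<lambda>h::real. -(1/(h-1)) - 1/sqrt(2*(h - ln h - 1))) \<longlongrightarrow> (1/3)) (at_left 1)"
  by real_asymp
lemma ra3: "(\<lambda>h::real. 1/sqrt(2*(h - ln h - 1))^3 - h/(h-1)^3) \<in> O[at_right 1](\<lambda>h. (h - ln h - 1) powr (-1/2))"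
  by real_asymp
lemma ra4: "(\<lambda>h::real. 1/sqrt(2*(h - ln h - 1))^3 + h/(h-1)^3) \<in> O[at_left 1](\<lambda>h. (h - ln h - 1) powr (-1/2))"
  by real_asymp


lemma j_up_eq: "j_up = (\<lambda>f. 1 / (h_up f - 1) - 1 / Sq f)"
  by (rule ext) (simp add: j_up_def Sq_def)

lemma j_lo_eq: "j_lo = (\<lambda>f. (-1) / (h_lo f - 1) - 1 / Sq f)"
proof (rule ext)
  fix f
  have "1 / (1 - h_lo f) = (-1) / (h_lo f - 1)"
    by (metis divide_minus_right minus_diff_eq minus_divide_left)
  then show "j_lo f = (-1) / (h_lo f - 1) - 1 / Sq f" by (simp add: j_lo_def Sq_def)
qed

definition Dup :: "real \<Rightarrow> real" where "Dup f = 1 / Sq f ^ 3 - 1 * h_up f / (h_up f - 1) ^ 3"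
definition Eup :: "real \<Rightarrow> real" where "Eup f = - 3 / Sq f ^ 5 + 1 * h_up f * (2 * h_up f + 1) / (h_up f - 1) ^ 5"
definition Dlo :: "real \<Rightarrow> real" where "Dlo f = 1 / Sq f ^ 3 - (-1) * h_lo f / (h_lo f - 1) ^ 3"
definition Elo :: "real \<Rightarrow> real" where "Elo f = - 3 / Sq f ^ 5 + (-1) * h_lo f * (2 * h_lo f + 1) / (h_lo f - 1) ^ 5"

lemma dj_up: assumes "f > 1" shows "(j_up has_real_derivative Dup f) (at f)"
  unfolding j_up_eq Dup_def
  by (rule J_deriv1[where c=1, OF assms _ h_up_deriv[OF assms]]) (use h_up(1)[OF assms] in simp)

lemma dj_lo: assumes "f > 1" shows "(j_lo has_real_derivative Dlo f) (at f)"
  unfolding j_lo_eq Dlo_def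
  by (rule J_deriv1[where c="-1", OF assms _ h_lo_deriv[OF assms]]) (use h_lo(2)[OF assms] in simp)

lemma dDup: assumes "f > 1" shows "(Dup has_real_derivative Eup f) (at f)"
  unfolding Dup_def[abs_def] Eup_def
  by (rule J_deriv2[where c=1, OF assms _ h_up_deriv[OF assms]]) (use h_up(1)[OF assms] in simp)

lemma dDlo: assumes "f > 1" shows "(Dlo has_real_derivative Elo f) (at f)"
  unfolding Dlo_def[abs_def] Elo_def
  by (rule J_deriv2[where c="-1", OF assms _ h_lo_deriv[OF assms]]) (use h_lo(2)[OF assms] in simp)

lemma deriv_j_up: "f > 1 \<Longrightarrow> deriv j_up f = Dup f" by (rule DERIV_imp_deriv[OF dj_up])
lemma deriv_j_lo: "f > 1 \<Longrightarrow> deriv j_lo f = Dlo f" by (rule DERIV_imp_deriv[OF dj_lo])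

lemma ddj_up: assumes "f > 1" shows "(deriv j_up has_real_derivative Eup f) (at f)"
  by (rule has_field_derivative_transform_within_open[OF dDup[OF assms], of "{1<..}"])
     (use assms deriv_j_up in auto)
lemma ddj_lo: assumes "f > 1" shows "(deriv j_lo has_real_derivative Elo f) (at f)"
  by (rule has_field_derivative_transform_within_open[OF dDlo[OF assms], of "{1<..}"])
     (use assms deriv_j_lo in auto)

lemma dS: assumes "f > 1" shows "((\<lambda>x. j_up x + j_lo x) has_real_derivative Dup f + Dlo f) (at f)"
  by (rule DERIV_add[OF dj_up[OF assms] dj_lo[OF assms]])

lemma deriv_S: "f > 1 \<Longrightarrow> deriv (\<lambda>x. j_up x + j_lo x) f = Dup f + Dlo f" by (rule DERIV_imp_deriv[OF dS])

lemma ddS: assumes "f > 1" shows "(deriv (\<lambda>x. j_up x + j_lo x) has_real_derivative Eup f + Elo f) (at f)"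
  by (rule has_field_derivative_transform_within_open[OF DERIV_add[OF dDup[OF assms] dDlo[OF assms]], of "{1<..}"])
     (use assms deriv_S in auto)

lemma Sq_h: "h - ln h = f \<Longrightarrow> Sq f = sqrt (2*(h - ln h - 1))" by (simp add: Sq_def)

lemma Dup_pos: assumes "f > 1" shows "Dup f > 0"
proof -
  define h where "h = h_up f"
  have h: "h > 1" "h - ln h = f" using h_up[OF assms] by (auto simp: h_def)
  have s: "Sq f > 0" using Sq_pos assms by simp
  have "h * Sq f ^ 3 < abs (h-1) ^ 3" unfolding Sq_h[OF h(2)] using C12(1)[of h] h by simp
  from s1u[OF s h(1) this] show ?thesis by (simp add: Dup_def h_def)
qed

lemma Dlo_pos: assumes "f > 1" shows "Dlo f > 0"
proof -
  define h where "h = h_lo f"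
  have h: "h > 0" "h < 1" "h - ln h = f" using h_lo[OF assms] by (auto simp: h_def)
  have s: "Sq f > 0" using Sq_pos assms by simp
  have "h * Sq f ^ 3 < abs (h-1) ^ 3" unfolding Sq_h[OF h(3)] using C12(1)[of h] h by simp
  from s1l[OF s h(1,2) this] show ?thesis by (simp add: Dlo_def h_def)
qed

lemma Eup_neg: assumes "f > 1" shows "Eup f < 0"
proof -
  define h where "h = h_up f"
  have h: "h > 1" "h - ln h = f" using h_up[OF assms] by (auto simp: h_def)
  have s: "Sq f > 0" using Sq_pos assms by simp
  have "h*(2*h+1) * Sq f ^ 5 < 3 * abs (h-1) ^ 5" unfolding Sq_h[OF h(2)] using C12(2)[of h] h by simp
  from s2u[OF s h(1) this] show ?thesis by (simp add: Eup_def h_def)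
qed

lemma Elo_neg: assumes "f > 1" shows "Elo f < 0"
proof -
  define h where "h = h_lo f"
  have h: "h > 0" "h < 1" "h - ln h = f" using h_lo[OF assms] by (auto simp: h_def)
  have s: "Sq f > 0" using Sq_pos assms by simp
  have "h*(2*h+1) * Sq f ^ 5 < 3 * abs (h-1) ^ 5" unfolding Sq_h[OF h(3)] using C12(2)[of h] h by simp
  from s2l[OF s h(1,2) this] show ?thesis by (simp add: Elo_def h_def)
qed


lemma ev_gt1: "eventually (\<lambda>f. f > 1) (at_right (1::real))" by (rule eventually_at_right_less)

lemma lim_j_up: "(j_up \<longlongrightarrow> -(1/3)) (at_right 1)"
proof -
  have "((\<lambda>f. 1/(h_up f-1) - 1/sqrt(2*(h_up f - ln (h_up f) - 1))) \<longlongrightarrow> -(1/3)) (at_right 1)"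
    by (rule filterlim_compose[OF ra1 L_up])
  moreover have "eventually (\<lambda>f. 1/(h_up f-1) - 1/sqrt(2*(h_up f - ln (h_up f) - 1)) = j_up f) (at_right 1)"
    using ev_gt1
  proof eventually_elim
    case (elim f) show ?case using h_up(2)[OF elim] by (simp add: j_up_def)
  qed
  ultimately show ?thesis by (rule tendsto_cong[THEN iffD1, rotated])
qed

lemma lim_j_lo: "(j_lo \<longlongrightarrow> 1/3) (at_right 1)"
proof -
  have "((\<lambda>f. -(1/(h_lo f-1)) - 1/sqrt(2*(h_lo f - ln (h_lo f) - 1))) \<longlongrightarrow> 1/3) (at_right 1)"
    by (rule filterlim_compose[OF ra2 L_lo])
  moreover have "eventually (\<lambda>f. -(1/(h_lo f-1)) - 1/sqrt(2*(h_lo f - ln (h_lo f) - 1)) = j_lo f) (at_right 1)"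
    using ev_gt1
  proof eventually_elim
    case (elim f) show ?case using h_lo(3)[OF elim] by (simp add: j_lo_eq Sq_def)
  qed
  ultimately show ?thesis by (rule tendsto_cong[THEN iffD1, rotated])
qed

lemma O_up: "deriv j_up \<in> O[at_right 1](\<lambda>f. (f - 1) powr (-1/2))"
proof -
  have 1: "(\<lambda>f. 1/sqrt(2*(h_up f - ln (h_up f) - 1))^3 - h_up f/(h_up f-1)^3)
      \<in> O[at_right 1](\<lambda>f. (h_up f - ln (h_up f) - 1) powr (-1/2))"
    by (rule landau_o.big.compose[OF ra3 L_up])
  have 2: "eventually (\<lambda>f. (h_up f - ln (h_up f) - 1) powr (-1/2) = (f - 1) powr (-1/2)) (at_right 1)"
    using ev_gt1
  proof eventually_elim
    case (elim f) show ?case using h_up(2)[OF elim] by simp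
  qed
  have 3: "eventually (\<lambda>f. 1/sqrt(2*(h_up f - ln (h_up f) - 1))^3 - h_up f/(h_up f-1)^3 = deriv j_up f) (at_right 1)"
    using ev_gt1
  proof eventually_elim
    case (elim f) show ?case using h_up(2)[OF elim] deriv_j_up[OF elim] by (simp add: Dup_def Sq_def)
  qed
  from 1 show ?thesis unfolding landau_o.big.cong[OF 2] landau_o.big.in_cong[OF 3] .
qed

lemma O_lo: "deriv j_lo \<in> O[at_right 1](\<lambda>f. (f - 1) powr (-1/2))"
proof -
  have 1: "(\<lambda>f. 1/sqrt(2*(h_lo f - ln (h_lo f) - 1))^3 + h_lo f/(h_lo f-1)^3)
      \<in> O[at_right 1](\<lambda>f. (h_lo f - ln (h_lo f) - 1) powr (-1/2))"
    by (rule landau_o.big.compose[OF ra4 L_lo])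
  have 2: "eventually (\<lambda>f. (h_lo f - ln (h_lo f) - 1) powr (-1/2) = (f - 1) powr (-1/2)) (at_right 1)"
    using ev_gt1
  proof eventually_elim
    case (elim f) show ?case using h_lo(3)[OF elim] by simp
  qed
  have 3: "eventually (\<lambda>f. 1/sqrt(2*(h_lo f - ln (h_lo f) - 1))^3 + h_lo f/(h_lo f-1)^3 = deriv j_lo f) (at_right 1)"
    using ev_gt1
  proof eventually_elim
    case (elim f) show ?case using h_lo(3)[OF elim] deriv_j_lo[OF elim] by (simp add: Dlo_def Sq_def)
  qed
  from 1 show ?thesis unfolding landau_o.big.cong[OF 2] landau_o.big.in_cong[OF 3] .
qed

lemma O_S: "deriv (\<lambda>x. j_up x + j_lo x) \<in> O[at_right 1](\<lambda>f. (f - 1) powr (-1/2))"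
proof -
  have 3: "eventually (\<lambda>f. deriv j_up f + deriv j_lo f = deriv (\<lambda>x. j_up x + j_lo x) f) (at_right 1)"
    using ev_gt1
  proof eventually_elim
    case (elim f) show ?case using deriv_j_up[OF elim] deriv_j_lo[OF elim] deriv_S[OF elim] by simp
  qed
  from sum_in_bigo(1)[OF O_up O_lo] show ?thesis unfolding landau_o.big.in_cong[OF 3] .
qed

lemma S_mono: assumes "1 < a" "a < b" shows "j_up a + j_lo a < j_up b + j_lo b"
proof (rule DERIV_pos_imp_increasing_open[OF assms(2), where f = "\<lambda>x. j_up x + j_lo x"])
  fix x assume "a < x" "x < b"
  then have x: "x > 1" using assms by simp
  show "\<exists>y. ((\<lambda>x. j_up x + j_lo x) has_real_derivative y) (at x) \<and> 0 < y"
    using dS[OF x] Dup_pos[OF x] Dlo_pos[OF x] by (intro exI[of _ "Dup x + Dlo x"]) auto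
next
  show "continuous_on {a..b} (\<lambda>x. j_up x + j_lo x)"
  proof (rule continuous_at_imp_continuous_on, rule ballI)
    fix x assume "x \<in> {a..b}"
    then have "x > 1" using assms by auto
    then show "isCont (\<lambda>x. j_up x + j_lo x) x" by (rule DERIV_isCont[OF dS])
  qed
qed

lemma lim_top: "((\<lambda>x. j_up x + j_lo x) \<longlongrightarrow> 1) at_top"
proof -
  have evt: "eventually (\<lambda>f. f > (1::real)) at_top" by (rule eventually_gt_at_top)
  have a: "((\<lambda>f. 1 / (h_up f - 1)) \<longlongrightarrow> 0) at_top"
  proof (rule tendsto_sandwich[of "\<lambda>_. 0" _ _ "\<lambda>f. 1/(f-1)"])
    show "eventually (\<lambda>f. 0 \<le> 1 / (h_up f - 1)) at_top" using evt
    proof eventually_elim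
      case (elim f) show ?case using h_up(1)[OF elim] by simp
    qed
    show "eventually (\<lambda>f. 1 / (h_up f - 1) \<le> 1/(f-1)) at_top" using evt
    proof eventually_elim
      case (elim f)
      have "ln (h_up f) > 0" using h_up(1)[OF elim] by simp
      then have "f \<le> h_up f" using h_up(2)[OF elim] by simp
      then show ?case using elim by (simp add: divide_simps)
    qed
    show "((\<lambda>_. 0) \<longlongrightarrow> (0::real)) at_top" by simp
    show "((\<lambda>f. 1/(f-1)) \<longlongrightarrow> (0::real)) at_top" by real_asymp
  qed
  have hl: "(h_lo \<longlongrightarrow> 0) at_top"
  proof (rule tendsto_sandwich[of "\<lambda>_. 0" _ _ "\<lambda>f. exp (1 - f)"])
    show "eventually (\<lambda>f. 0 \<le> h_lo f) at_top" using evt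
    proof eventually_elim
      case (elim f) show ?case using h_lo(1)[OF elim] by simp
    qed
    show "eventually (\<lambda>f. h_lo f \<le> exp (1 - f)) at_top" using evt
    proof eventually_elim
      case (elim f)
      have "h_lo f = exp (ln (h_lo f))" using h_lo(1)[OF elim] by simp
      also have "ln (h_lo f) = h_lo f - f" using h_lo(3)[OF elim] by simp
      finally have "h_lo f = exp (h_lo f - f)" .
      also have "\<dots> \<le> exp (1 - f)" using h_lo(2)[OF elim] by simp
      finally show ?case .
    qed
    show "((\<lambda>_. 0) \<longlongrightarrow> (0::real)) at_top" by simp
    show "((\<lambda>f. exp (1 - f)) \<longlongrightarrow> (0::real)) at_top" by real_asymp
  qed
  have b: "((\<lambda>f. 1 / (1 - h_lo f)) \<longlongrightarrow> 1 / (1 - 0)) at_top"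
    by (intro tendsto_intros hl) simp
  have c: "((\<lambda>f. 1 / sqrt (2*(f-1))) \<longlongrightarrow> (0::real)) at_top" by real_asymp
  have "((\<lambda>f. (1 / (h_up f - 1) - 1 / sqrt (2*(f-1))) + (1 / (1 - h_lo f) - 1 / sqrt (2*(f-1))))
      \<longlongrightarrow> (0 - 0) + (1 / (1 - 0) - 0)) at_top"
    by (intro tendsto_add tendsto_diff a b c)
  then show ?thesis by (simp add: j_up_def j_lo_def)
qed

lemma S_bounds: assumes "f > 1" shows "0 < j_up f + j_lo f \<and> j_up f + j_lo f < 1"
proof
  define m where "m = (1 + f) / 2"
  have m: "1 < m" "m < f" using assms by (auto simp: m_def)
  have "0 \<le> j_up m + j_lo m"
  proof (rule tendsto_upperbound)
    show "((\<lambda>x. j_up x + j_lo x) \<longlongrightarrow> 0) (at_right 1)"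
      using tendsto_add[OF lim_j_up lim_j_lo] by simp
    have "eventually (\<lambda>x. x \<in> {1<..<m}) (at_right 1)" by (rule eventually_at_right_real[OF m(1)])
    then show "eventually (\<lambda>x. j_up x + j_lo x \<le> j_up m + j_lo m) (at_right 1)"
    proof eventually_elim
      case (elim x) then show ?case using S_mono[of x m] by auto
    qed
  qed simp
  then show "0 < j_up f + j_lo f" using S_mono[OF m] by simp
  have "j_up (f+1) + j_lo (f+1) \<le> 1"
  proof (rule tendsto_lowerbound[OF lim_top])
    show "eventually (\<lambda>x. j_up (f+1) + j_lo (f+1) \<le> j_up x + j_lo x) at_top"
      using eventually_ge_at_top[of "f+1"]
    proof eventually_elim
      case (elim x) then show ?case using S_mono[of "f+1" x] assms by (cases "x = f+1") auto
    qed
  qed simp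
  then show "j_up f + j_lo f < 1" using S_mono[of f "f+1"] assms by simp
qed

lemma S_identity: assumes "f > 1"
  shows "j_up f + j_lo f = 1 / (h_up f - 1) + 1 / (1 - h_lo f) - sqrt (2 / (f - 1))"
proof -
  have p: "f - 1 > 0" using assms by simp
  have r1: "sqrt (2*(f-1)) = sqrt 2 * sqrt (f-1)" by (rule real_sqrt_mult)
  have idt: "1 / sqrt (2*(f-1)) + 1 / sqrt (2*(f-1)) = sqrt (2 / (f - 1))"
  proof -
    have "1 / sqrt (2*(f-1)) + 1 / sqrt (2*(f-1)) = 2 / (sqrt 2 * sqrt (f-1))" unfolding r1 by simp
    also have "\<dots> = (sqrt 2 * sqrt 2) / (sqrt 2 * sqrt (f-1))" by simp
    also have "\<dots> = sqrt 2 / sqrt (f-1)" by (rule nonzero_mult_divide_mult_cancel_left) simp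
    also have "\<dots> = sqrt (2 / (f-1))" by (simp add: real_sqrt_divide)
    finally show ?thesis .
  qed
  have e: "j_up f + j_lo f = 1/(h_up f - 1) + 1/(1 - h_lo f) - (1/sqrt(2*(f-1)) + 1/sqrt(2*(f-1)))"
    unfolding j_up_def j_lo_def by simp
  show ?thesis unfolding e idt by (rule refl)
qed


theorem lemma2p3:
  shows
   \<comment> \<open>(a)\<close>
   "(j_up \<longlongrightarrow> -(1/3)) (at_right 1) \<and> (j_lo \<longlongrightarrow> 1/3) (at_right 1)
   \<comment> \<open>(b)\<close>
    \<and> (\<forall>f>1. (j_up has_real_derivative deriv j_up f) (at f) \<and> deriv j_up f > 0)
    \<and> (\<forall>f>1. (j_lo has_real_derivative deriv j_lo f) (at f) \<and> deriv j_lo f > 0)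
    \<and> deriv j_up \<in> O[at_right 1](\<lambda>f. (f - 1) powr (-1/2))
    \<and> deriv j_lo \<in> O[at_right 1](\<lambda>f. (f - 1) powr (-1/2))
   \<comment> \<open>(c)\<close>
    \<and> (\<forall>f>1. (deriv j_up has_real_derivative deriv (deriv j_up) f) (at f)
              \<and> deriv (deriv j_up) f < 0)
    \<and> (\<forall>f>1. (deriv j_lo has_real_derivative deriv (deriv j_lo) f) (at f)
              \<and> deriv (deriv j_lo) f < 0)
   \<comment> \<open>(d)\<close>
    \<and> (\<forall>f>1. j_up f + j_lo f = 1 / (h_up f - 1) + 1 / (1 - h_lo f) - sqrt (2 / (f - 1)))
    \<and> (\<forall>f>1. ((\<lambda>x. j_up x + j_lo x) has_real_derivative deriv (\<lambda>x. j_up x + j_lo x) f) (at f)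
              \<and> deriv (\<lambda>x. j_up x + j_lo x) f > 0)
    \<and> (\<forall>f>1. (deriv (\<lambda>x. j_up x + j_lo x) has_real_derivative
                 deriv (deriv (\<lambda>x. j_up x + j_lo x)) f) (at f)
              \<and> deriv (deriv (\<lambda>x. j_up x + j_lo x)) f < 0)
    \<and> ((\<lambda>x. j_up x + j_lo x) \<longlongrightarrow> 0) (at_right 1)
    \<and> deriv (\<lambda>x. j_up x + j_lo x) \<in> O[at_right 1](\<lambda>f. (f - 1) powr (-1/2))
   \<comment> \<open>(e)\<close>
    \<and> (\<forall>f>1. 0 < j_up f + j_lo f \<and> j_up f + j_lo f < 1)"
  proof -
  have b1: "\<forall>f>1. (j_up has_real_derivative deriv j_up f) (at f) \<and> deriv j_up f > 0"
    using dj_up deriv_j_up Dup_pos by simp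
  have b2: "\<forall>f>1. (j_lo has_real_derivative deriv j_lo f) (at f) \<and> deriv j_lo f > 0"
    using dj_lo deriv_j_lo Dlo_pos by simp
  have c1: "\<forall>f>1. (deriv j_up has_real_derivative deriv (deriv j_up) f) (at f) \<and> deriv (deriv j_up) f < 0"
    using ddj_up DERIV_imp_deriv[OF ddj_up] Eup_neg by simp
  have c2: "\<forall>f>1. (deriv j_lo has_real_derivative deriv (deriv j_lo) f) (at f) \<and> deriv (deriv j_lo) f < 0"
    using ddj_lo DERIV_imp_deriv[OF ddj_lo] Elo_neg by simp
  have d2: "\<forall>f>1. ((\<lambda>x. j_up x + j_lo x) has_real_derivative deriv (\<lambda>x. j_up x + j_lo x) f) (at f)
              \<and> deriv (\<lambda>x. j_up x + j_lo x) f > 0"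
    using dS deriv_S Dup_pos Dlo_pos by (simp add: add_pos_pos)
  have d3: "\<forall>f>1. (deriv (\<lambda>x. j_up x + j_lo x) has_real_derivative
                 deriv (deriv (\<lambda>x. j_up x + j_lo x)) f) (at f)
              \<and> deriv (deriv (\<lambda>x. j_up x + j_lo x)) f < 0"
    using ddS DERIV_imp_deriv[OF ddS] Eup_neg Elo_neg by (simp add: add_neg_neg)
  have d4: "((\<lambda>x. j_up x + j_lo x) \<longlongrightarrow> 0) (at_right 1)"
    using tendsto_add[OF lim_j_up lim_j_lo] by simp
  show ?thesis
    using lim_j_up lim_j_lo b1 b2 O_up O_lo c1 c2 S_identity d2 d3 d4 O_S S_bounds by blast
qed

end
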